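(* Let $\gamma(du\mid h)$ be a finite-memory policy and suppose there exist non-trivial (nonzero) measures $\lambda_x$ on $\mathbb{X}$ and $\lambda_u$ on $\mathbb{U}$ such that $\mathcal{T}(dx_1\mid x,u)\ge\lambda_x(dx_1)$ for all $(x,u)\in\mathbb{X}\times\mathbb{U}$ and $\gamma(du\mid h)\ge\lambda_u(du)$ for all $h\in\mathbb{H}$. Then the Markov chain $(h_t,X_t,U_t)$ under $\gamma$ is exponentially ergodic.
   Context: POMDP: $\mathbb{X}\subset\mathbb{R}^m$, $\mathbb{Y}\subset\mathbb{R}^n$, $\mathbb{U}\subset\mathbb{R}^l$ Borel sets; transition kernel $\mathcal{T}(dx'\mid x,u)$ from $\mathbb{X}\times\mathbb{U}$ to $\mathbb{X}$, observation kernel $O(dy\mid x)$ from $\mathbb{X}$ to $\mathbb{Y}$; conditionally on the past, $Y_t\sim O(\cdot\mid X_t)$ and $X_{t+1}\sim\mathcal{T}(\cdot\mid X_t,U_t)$. Fix a memory length $N\ge1$; the finite-memory variable is $h_t=(Y_t,\dots,Y_{t-N},U_{t-1},\dots,U_{t-N})\in\mathbb{H}:=\mathbb{Y}^{N+1}\times\mathbb{U}^N$. A finite-memory policy is a stochastic kernel $\gamma(du\mid h)$ from $\mathbb{H}$ to $\mathbb{U}$ with $U_t\sim\gamma(\cdot\mid h_t)$; under it $(h_t,X_t,U_t)$ is a Markov chain. Exponential ergodicity means this chain has a unique invariant probability measure and converges to it exponentially fast in total variation from every initial condition. *)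

theory Defs
  imports "HOL-Probability.Probability"
begin

definition bspace :: "'a::euclidean_space set \<Rightarrow> 'a measure" where
  "bspace A = restrict_space borel A"

text \<open>Finite-memory space H = Y^(N+1) x U^N.  A memory value is a pair (ys, us)
  with ys i = Y_(t-i) for i in {0..N} and us j = U_(t-j) for j in {1..N}.\<close>
definition mem_space :: "nat \<Rightarrow> 'y measure \<Rightarrow> 'u measure \<Rightarrow> ((nat \<Rightarrow> 'y) \<times> (nat \<Rightarrow> 'u)) measure" where
  "mem_space N MY MU = (PiM {..N} (\<lambda>_. MY)) \<Otimes>\<^sub>M (PiM {1..N} (\<lambda>_. MU))"

text \<open>Memory update: h_(t+1) from h_t, the new observation Y_(t+1) and the action U_t.\<close>
definition mem_shift :: "nat \<Rightarrow> (nat \<Rightarrow> 'y) \<times> (nat \<Rightarrow> 'u) \<Rightarrow> 'y \<Rightarrow> 'u \<Rightarrow> (nat \<Rightarrow> 'y) \<times> (nat \<Rightarrow> 'u)" where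
  "mem_shift N h y u =
     ((\<lambda>i\<in>{..N}. if i = 0 then y else fst h (i - 1)),
      (\<lambda>j\<in>{1..N}. if j = 1 then u else snd h (j - 1)))"

definition fm_kernel ::
  "(((nat \<Rightarrow> 'y) \<times> (nat \<Rightarrow> 'u)) \<times> 'x \<times> 'u) measure \<Rightarrow> nat \<Rightarrow> ('x \<times> 'u \<Rightarrow> 'x measure) \<Rightarrow> ('x \<Rightarrow> 'y measure) \<Rightarrow>
   ((nat \<Rightarrow> 'y) \<times> (nat \<Rightarrow> 'u) \<Rightarrow> 'u measure) \<Rightarrow>
   ((nat \<Rightarrow> 'y) \<times> (nat \<Rightarrow> 'u)) \<times> 'x \<times> 'u \<Rightarrow>
   (((nat \<Rightarrow> 'y) \<times> (nat \<Rightarrow> 'u)) \<times> 'x \<times> 'u) measure" where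
  "fm_kernel S N T Obs \<gamma> z =
     (case z of (h, x, u) \<Rightarrow>
        T (x, u) \<bind> (\<lambda>x'. Obs x' \<bind> (\<lambda>y'.
          let h' = mem_shift N h y' u in \<gamma> h' \<bind> (\<lambda>u'. return S (h', x', u')))))"

fun kernel_pow :: "'a measure \<Rightarrow> ('a \<Rightarrow> 'a measure) \<Rightarrow> nat \<Rightarrow> 'a \<Rightarrow> 'a measure" where
  "kernel_pow S P 0 z = return S z"
| "kernel_pow S P (Suc n) z = kernel_pow S P n z \<bind> P"

definition tv_dist :: "'a measure \<Rightarrow> 'a measure \<Rightarrow> real" where
  "tv_dist \<mu> \<nu> = (SUP A \<in> sets \<mu>. \<bar>measure \<mu> A - measure \<nu> A\<bar>)"

definition exp_ergodic :: "'a measure \<Rightarrow> ('a \<Rightarrow> 'a measure) \<Rightarrow> bool" where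
  "exp_ergodic S P \<longleftrightarrow>
     (\<exists>\<pi>. prob_space \<pi> \<and> sets \<pi> = sets S \<and> (\<pi> \<bind> P) = \<pi> \<and>
        (\<forall>\<nu>. prob_space \<nu> \<and> sets \<nu> = sets S \<and> (\<nu> \<bind> P) = \<nu> \<longrightarrow> \<nu> = \<pi>) \<and>
        (\<exists>\<rho>::real. 0 \<le> \<rho> \<and> \<rho> < 1 \<and>
           (\<forall>z\<in>space S. \<exists>C::real. \<forall>n. tv_dist (kernel_pow S P n z) \<pi> \<le> C * \<rho> ^ n)))"

end

theory Submission
  imports Defs
begin

lemma bind_assoc_S:
  assumes "sets M = sets S" "f \<in> S \<rightarrow>\<^sub>M subprob_algebra N" "g \<in> N \<rightarrow>\<^sub>M subprob_algebra R"
  shows "bind (bind M f) g = bind M (\<lambda>x. bind (f x) g)"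
  by (rule bind_assoc) (use assms measurable_cong_sets[OF assms(1) refl] in auto)

lemma kernel_pow_meas:
  assumes P: "P \<in> S \<rightarrow>\<^sub>M prob_algebra S"
  shows "kernel_pow S P n \<in> S \<rightarrow>\<^sub>M prob_algebra S"
proof (induction n)
  case 0
  then show ?case by (simp add: measurable_return_prob_space)
next
  case (Suc n)
  have "(\<lambda>z. kernel_pow S P n z \<bind> P) \<in> S \<rightarrow>\<^sub>M prob_algebra S"
    by (rule measurable_bind_prob_space[OF Suc P])
  then show ?case by simp
qed

lemma kernel_pow_sub:
  assumes P: "P \<in> S \<rightarrow>\<^sub>M prob_algebra S"
  shows "kernel_pow S P n \<in> S \<rightarrow>\<^sub>M subprob_algebra S"
  using kernel_pow_meas[OF P] measurable_prob_algebraD by blast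

lemma kernel_pow_space:
  assumes P: "P \<in> S \<rightarrow>\<^sub>M prob_algebra S" and z: "z \<in> space S"
  shows "kernel_pow S P n z \<in> space (prob_algebra S)"
  using measurable_space[OF kernel_pow_meas[OF P] z] .

lemma kernel_pow_add:
  assumes P: "P \<in> S \<rightarrow>\<^sub>M prob_algebra S" and z: "z \<in> space S"
  shows "kernel_pow S P (a + b) z = kernel_pow S P a z \<bind> kernel_pow S P b"
proof (induction b)
  case 0
  have "sets (kernel_pow S P a z) = sets S"
    using kernel_pow_space[OF P z] by (simp add: space_prob_algebra)
  then show ?case by (simp add: bind_return'')
next
  case (Suc b)
  have "kernel_pow S P (a + Suc b) z = (kernel_pow S P a z \<bind> kernel_pow S P b) \<bind> P"
    using Suc by simp
  also have "\<dots> = kernel_pow S P a z \<bind> (\<lambda>w. kernel_pow S P b w \<bind> P)"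
    using kernel_pow_space[OF P z] kernel_pow_sub[OF P] measurable_prob_algebraD[OF P]
    by (intro bind_assoc_S[where S=S]) (auto simp: space_prob_algebra)
  finally show ?case by simp
qed

lemma kernel_pow_Suc':
  assumes P: "P \<in> S \<rightarrow>\<^sub>M prob_algebra S" and z: "z \<in> space S"
  shows "kernel_pow S P (Suc n) z = P z \<bind> kernel_pow S P n"
proof -
  have "kernel_pow S P (1 + n) z = kernel_pow S P 1 z \<bind> kernel_pow S P n"
    by (rule kernel_pow_add[OF P z])
  moreover have "kernel_pow S P 1 z = P z"
    using bind_return[OF measurable_prob_algebraD[OF P] z] by simp
  ultimately show ?thesis by simp
qed

lemma bind_kernel_pow_add:
  assumes P: "P \<in> S \<rightarrow>\<^sub>M prob_algebra S" and mu: "sets \<mu> = sets S"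
  shows "\<mu> \<bind> kernel_pow S P (a + b) = (\<mu> \<bind> kernel_pow S P a) \<bind> kernel_pow S P b"
proof -
  have "(\<mu> \<bind> kernel_pow S P a) \<bind> kernel_pow S P b = \<mu> \<bind> (\<lambda>z. kernel_pow S P a z \<bind> kernel_pow S P b)"
    by (rule bind_assoc_S[OF mu kernel_pow_sub[OF P] kernel_pow_sub[OF P]])
  also have "\<dots> = \<mu> \<bind> kernel_pow S P (a + b)"
    by (rule bind_cong[OF refl]) (simp add: kernel_pow_add[OF P] sets_eq_imp_space_eq[OF mu])
  finally show ?thesis by simp
qed

definition Gf :: "'a measure \<Rightarrow> ('a \<Rightarrow> real) set" where
  "Gf S = {g. g \<in> borel_measurable S \<and> (\<forall>x\<in>space S. 0 \<le> g x \<and> g x \<le> 1)}"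

definition dst :: "'a measure \<Rightarrow> 'a measure \<Rightarrow> 'a measure \<Rightarrow> real" where
  "dst S \<mu> \<nu> = (SUP g\<in>Gf S. \<bar>(\<integral>x. g x \<partial>\<mu>) - (\<integral>x. g x \<partial>\<nu>)\<bar>)"

lemma int_Gf_bounds:
  assumes mu: "\<mu> \<in> space (prob_algebra S)" and g: "g \<in> Gf S"
  shows "0 \<le> (\<integral>x. g x \<partial>\<mu>)" "(\<integral>x. g x \<partial>\<mu>) \<le> 1"
proof -
  interpret prob_space \<mu> using mu by (simp add: space_prob_algebra)
  have sm: "sets \<mu> = sets S" using mu by (simp add: space_prob_algebra)
  have sp: "space \<mu> = space S" using sets_eq_imp_space_eq[OF sm] .
  have gm: "g \<in> borel_measurable \<mu>" using g unfolding Gf_def measurable_cong_sets[OF sm refl] by simp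
  have b: "\<And>x. x \<in> space \<mu> \<Longrightarrow> 0 \<le> g x \<and> g x \<le> 1" using g sp by (auto simp: Gf_def)
  show "0 \<le> (\<integral>x. g x \<partial>\<mu>)" using b by (intro integral_nonneg_AE AE_I2) auto
  have int: "integrable \<mu> g"
    using b gm by (intro integrable_const_bound[where B=1] AE_I2) auto
  have "(\<integral>x. g x \<partial>\<mu>) \<le> (\<integral>x. 1 \<partial>\<mu>)"
    using b by (intro integral_mono_AE int AE_I2) auto
  then show "(\<integral>x. g x \<partial>\<mu>) \<le> 1" by (simp add: prob_space)
qed


lemma Gf_const0: "(\<lambda>_. 0) \<in> Gf S" by (simp add: Gf_def)

lemma dst_bdd:
  assumes mu: "\<mu> \<in> space (prob_algebra S)" and nu: "\<nu> \<in> space (prob_algebra S)"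
  shows "bdd_above ((\<lambda>g. \<bar>(\<integral>x. g x \<partial>\<mu>) - (\<integral>x. g x \<partial>\<nu>)\<bar>) ` Gf S)"
proof (rule bdd_aboveI[where M=1])
  fix r assume "r \<in> (\<lambda>g. \<bar>(\<integral>x. g x \<partial>\<mu>) - (\<integral>x. g x \<partial>\<nu>)\<bar>) ` Gf S"
  then obtain g where g: "g \<in> Gf S" and r: "r = \<bar>(\<integral>x. g x \<partial>\<mu>) - (\<integral>x. g x \<partial>\<nu>)\<bar>" by blast
  show "r \<le> 1" using int_Gf_bounds[OF mu g] int_Gf_bounds[OF nu g] unfolding r by linarith
qed

lemma dst_upper:
  assumes mu: "\<mu> \<in> space (prob_algebra S)" and nu: "\<nu> \<in> space (prob_algebra S)" and g: "g \<in> Gf S"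
  shows "\<bar>(\<integral>x. g x \<partial>\<mu>) - (\<integral>x. g x \<partial>\<nu>)\<bar> \<le> dst S \<mu> \<nu>"
  unfolding dst_def by (rule cSUP_upper[OF g dst_bdd[OF mu nu]])

lemma dst_nonneg:
  assumes mu: "\<mu> \<in> space (prob_algebra S)" and nu: "\<nu> \<in> space (prob_algebra S)"
  shows "0 \<le> dst S \<mu> \<nu>"
  using dst_upper[OF mu nu Gf_const0] by simp

lemma dst_le1:
  assumes mu: "\<mu> \<in> space (prob_algebra S)" and nu: "\<nu> \<in> space (prob_algebra S)"
  shows "dst S \<mu> \<nu> \<le> 1"
  unfolding dst_def
proof (rule cSUP_least)
  show "Gf S \<noteq> {}" using Gf_const0 by blast
  fix g assume g: "g \<in> Gf S"
  show "\<bar>(\<integral>x. g x \<partial>\<mu>) - (\<integral>x. g x \<partial>\<nu>)\<bar> \<le> 1"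
    using int_Gf_bounds[OF mu g] int_Gf_bounds[OF nu g] by linarith
qed

lemma tv_le_dst:
  assumes mu: "\<mu> \<in> space (prob_algebra S)" and nu: "\<nu> \<in> space (prob_algebra S)"
  shows "tv_dist \<mu> \<nu> \<le> dst S \<mu> \<nu>"
  unfolding tv_dist_def
proof (rule cSUP_least)
  show "sets \<mu> \<noteq> {}" by auto
next
  fix A assume A: "A \<in> sets \<mu>"
  interpret m: prob_space \<mu> using mu by (simp add: space_prob_algebra)
  interpret n: prob_space \<nu> using nu by (simp add: space_prob_algebra)
  have sm: "sets \<mu> = sets S" "sets \<nu> = sets S" using mu nu by (auto simp: space_prob_algebra)
  have "(indicator A :: _ \<Rightarrow> real) \<in> Gf S"
    using A sm by (auto simp: Gf_def indicator_def)
  from dst_upper[OF mu nu this] A sm show "\<bar>measure \<mu> A - measure \<nu> A\<bar> \<le> dst S \<mu> \<nu>"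
    by simp
qed

lemma eq_of_tv0:
  assumes mu: "\<mu> \<in> space (prob_algebra S)" and nu: "\<nu> \<in> space (prob_algebra S)"
    and d: "tv_dist \<mu> \<nu> \<le> 0"
  shows "\<mu> = \<nu>"
proof (rule measure_eqI)
  interpret m: prob_space \<mu> using mu by (simp add: space_prob_algebra)
  interpret n: prob_space \<nu> using nu by (simp add: space_prob_algebra)
  have sm: "sets \<mu> = sets S" "sets \<nu> = sets S" using mu nu by (auto simp: space_prob_algebra)
  show "sets \<mu> = sets \<nu>" using sm by simp
  fix A assume A: "A \<in> sets \<mu>"
  have bdd: "bdd_above ((\<lambda>A. \<bar>measure \<mu> A - measure \<nu> A\<bar>) ` sets \<mu>)"
  proof (rule bdd_aboveI[where M=1])
    fix r assume "r \<in> (\<lambda>A. \<bar>measure \<mu> A - measure \<nu> A\<bar>) ` sets \<mu>"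
    then obtain B where "r = \<bar>measure \<mu> B - measure \<nu> B\<bar>" by blast
    moreover have "measure \<mu> B \<le> 1" "measure \<nu> B \<le> 1" "0 \<le> measure \<mu> B" "0 \<le> measure \<nu> B"
      by auto
    ultimately show "r \<le> 1" by linarith
  qed
  have "\<bar>measure \<mu> A - measure \<nu> A\<bar> \<le> tv_dist \<mu> \<nu>"
    unfolding tv_dist_def by (rule cSUP_upper[OF A bdd])
  with d have "measure \<mu> A = measure \<nu> A" by simp
  then show "emeasure \<mu> A = emeasure \<nu> A"
    by (simp add: m.emeasure_eq_measure n.emeasure_eq_measure)
qed

lemma int_mono_measure:
  fixes g :: "'a \<Rightarrow> real"
  assumes M: "finite_measure M" and N: "finite_measure N"
    and sM: "sets M = sets S" and sN: "sets N = sets S"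
    and le: "\<And>A. A \<in> sets S \<Longrightarrow> emeasure M A \<le> emeasure N A"
    and g: "g \<in> borel_measurable S" and gb: "\<And>x. x \<in> space S \<Longrightarrow> 0 \<le> g x \<and> g x \<le> 1"
  shows "(\<integral>x. g x \<partial>M) \<le> (\<integral>x. g x \<partial>N)"
proof -
  have spM: "space M = space S" using sets_eq_imp_space_eq[OF sM] .
  have spN: "space N = space S" using sets_eq_imp_space_eq[OF sN] .
  have gM: "g \<in> borel_measurable M" using g unfolding measurable_cong_sets[OF sM refl] .
  have gN: "g \<in> borel_measurable N" using g unfolding measurable_cong_sets[OF sN refl] .
  have leM: "M \<le> N"
  proof -
    have "emeasure M A \<le> emeasure N A" for A
      using le[of A] sM sN by (cases "A \<in> sets S") (auto simp: emeasure_notin_sets)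
    then show ?thesis using sM sN spM spN by (simp add: le_measure_iff le_fun_def)
  qed
  have iM: "integrable M g"
    by (rule finite_measure.integrable_const_bound[OF M, where B=1]) (use gb spM gM in \<open>auto intro!: AE_I2\<close>)
  have iN: "integrable N g"
    by (rule finite_measure.integrable_const_bound[OF N, where B=1]) (use gb spN gN in \<open>auto intro!: AE_I2\<close>)
  have "ennreal (\<integral>x. g x \<partial>M) = (\<integral>\<^sup>+x. ennreal (g x) \<partial>M)"
    using gb spM by (intro nn_integral_eq_integral[symmetric] iM AE_I2) auto
  also have "\<dots> \<le> (\<integral>\<^sup>+x. ennreal (g x) \<partial>N)"
    by (rule nn_integral_mono_measure) (use sM sN leM in auto)
  also have "\<dots> = ennreal (\<integral>x. g x \<partial>N)"
    using gb spN by (intro nn_integral_eq_integral iN AE_I2) auto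
  finally have "ennreal (\<integral>x. g x \<partial>M) \<le> ennreal (\<integral>x. g x \<partial>N)" .
  moreover have "0 \<le> (\<integral>x. g x \<partial>N)"
    using gb spN by (intro integral_nonneg_AE AE_I2) auto
  ultimately show ?thesis by (simp add: ennreal_le_iff)
qed

locale doeblin =
  fixes S :: "'a measure" and P :: "'a \<Rightarrow> 'a measure" and m :: nat and c :: real and \<nu> :: "'a measure"
  assumes P: "P \<in> S \<rightarrow>\<^sub>M prob_algebra S" and m: "0 < m" and c: "0 < c" "c < 1"
    and nu_sets: "sets \<nu> = sets S" and nu_sp: "emeasure \<nu> (space S) = ennreal c"
    and minor: "\<And>z A. z \<in> space S \<Longrightarrow> A \<in> sets S \<Longrightarrow> emeasure \<nu> A \<le> emeasure (kernel_pow S P m z) A"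
begin

abbreviation "Pm \<equiv> kernel_pow S P m"

lemma nu_space: "space \<nu> = space S" using sets_eq_imp_space_eq[OF nu_sets] .

lemma nu_fin: "finite_measure \<nu>"
  by (rule finite_measureI) (simp add: nu_space nu_sp)

lemma nu_measure_sp: "measure \<nu> (space S) = c"
  using nu_sp c by (simp add: measure_def)

lemma Pm_prob: "z \<in> space S \<Longrightarrow> prob_space (Pm z)" "z \<in> space S \<Longrightarrow> sets (Pm z) = sets S"
  using kernel_pow_space[OF P, of z m] by (auto simp: space_prob_algebra)

lemma Pm_int_bounds:
  assumes z: "z \<in> space S" and g: "g \<in> Gf S"
  shows "0 \<le> (\<integral>x. g x \<partial>Pm z) - (\<integral>x. g x \<partial>\<nu>)"
    "(\<integral>x. g x \<partial>Pm z) - (\<integral>x. g x \<partial>\<nu>) \<le> 1 - c"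
proof -
  interpret Q: prob_space "Pm z" using Pm_prob[OF z] by simp
  have fin: "finite_measure (Pm z)" by (rule Q.finite_measure_axioms)
  have gm: "g \<in> borel_measurable S" and gb: "\<And>x. x \<in> space S \<Longrightarrow> 0 \<le> g x \<and> g x \<le> 1"
    using g by (auto simp: Gf_def)
  show "0 \<le> (\<integral>x. g x \<partial>Pm z) - (\<integral>x. g x \<partial>\<nu>)"
    using int_mono_measure[OF nu_fin fin nu_sets Pm_prob(2)[OF z] minor[OF z] gm gb] by simp
  have g1: "(\<lambda>x. 1 - g x) \<in> borel_measurable S" using gm by measurable
  have h: "(\<integral>x. 1 - g x \<partial>\<nu>) \<le> (\<integral>x. 1 - g x \<partial>Pm z)"
    using int_mono_measure[OF nu_fin fin nu_sets Pm_prob(2)[OF z] minor[OF z] g1] gb by auto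
  have spP: "space (Pm z) = space S" using sets_eq_imp_space_eq[OF Pm_prob(2)[OF z]] .
  have iP: "integrable (Pm z) g"
    using gm gb spP unfolding measurable_cong_sets[OF Pm_prob(2)[OF z] refl, symmetric]
    by (intro Q.integrable_const_bound[where B=1] AE_I2) auto
  have iN: "integrable \<nu> g"
    using gm gb nu_space unfolding measurable_cong_sets[OF nu_sets refl, symmetric]
    by (intro finite_measure.integrable_const_bound[OF nu_fin, where B=1] AE_I2) auto
  have "(\<integral>x. 1 - g x \<partial>\<nu>) = c - (\<integral>x. g x \<partial>\<nu>)"
    using iN nu_fin by (simp add: integral_diff finite_measure.integrable_const nu_space nu_measure_sp)
  moreover have "(\<integral>x. 1 - g x \<partial>Pm z) = 1 - (\<integral>x. g x \<partial>Pm z)"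
    using iP by (simp add: integral_diff Q.prob_space)
  ultimately show "(\<integral>x. g x \<partial>Pm z) - (\<integral>x. g x \<partial>\<nu>) \<le> 1 - c" using h by simp
qed

lemma Pm_sub: "Pm \<in> S \<rightarrow>\<^sub>M subprob_algebra S"
  by (rule kernel_pow_sub[OF P])

lemma int_Gf_integrable:
  assumes mu: "\<mu> \<in> space (prob_algebra S)" and g: "g \<in> Gf S"
  shows "integrable \<mu> g"
proof -
  interpret prob_space \<mu> using mu by (simp add: space_prob_algebra)
  have sm: "sets \<mu> = sets S" using mu by (simp add: space_prob_algebra)
  have sp: "space \<mu> = space S" using sets_eq_imp_space_eq[OF sm] .
  have gm: "g \<in> borel_measurable \<mu>" using g unfolding Gf_def measurable_cong_sets[OF sm refl] by simp
  show ?thesis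
    by (rule integrable_const_bound[where B=1]) (use g sp gm in \<open>auto simp: Gf_def intro!: AE_I2\<close>)
qed

lemma bind_Pm_int:
  assumes mu: "\<mu> \<in> space (prob_algebra S)" and g: "g \<in> Gf S"
  shows "(\<integral>x. g x \<partial>(\<mu> \<bind> Pm)) = (\<integral>z. (\<integral>x. g x \<partial>Pm z) \<partial>\<mu>)"
proof -
  interpret prob_space \<mu> using mu by (simp add: space_prob_algebra)
  have sm: "sets \<mu> = sets S" using mu by (simp add: space_prob_algebra)
  have sp: "space \<mu> = space S" using sets_eq_imp_space_eq[OF sm] .
  have gm: "g \<in> borel_measurable S" using g by (simp add: Gf_def)
  have Pmu: "Pm \<in> \<mu> \<rightarrow>\<^sub>M subprob_algebra S" using Pm_sub unfolding measurable_cong_sets[OF sm refl] .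
  show ?thesis
  proof (rule integral_bind[OF gm _ Pmu finite_measure_axioms, where B=1 and B'=1])
    show "\<And>x. x \<in> space S \<Longrightarrow> \<bar>g x\<bar> \<le> 1" using g by (auto simp: Gf_def)
    show "AE x in \<mu>. emeasure (Pm x) (space (Pm x)) \<le> ennreal 1"
      using Pm_prob sp by (intro AE_I2) (simp add: prob_space.emeasure_space_1)
  qed
qed

lemma contract:
  assumes mu: "\<mu> \<in> space (prob_algebra S)" and nu0: "\<nu>0 \<in> space (prob_algebra S)"
  shows "dst S (\<mu> \<bind> Pm) (\<nu>0 \<bind> Pm) \<le> (1 - c) * dst S \<mu> \<nu>0"
  unfolding dst_def[of S "\<mu> \<bind> Pm"]
proof (rule cSUP_least)
  show "Gf S \<noteq> {}" using Gf_const0 by blast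
  fix g assume g: "g \<in> Gf S"
  define F where "F z = (\<integral>x. g x \<partial>Pm z)" for z
  define a where "a = (\<integral>x. g x \<partial>\<nu>)"
  define h where "h z = (F z - a) / (1 - c)" for z
  have gm: "g \<in> borel_measurable S" using g by (simp add: Gf_def)
  have Fm: "F \<in> borel_measurable S"
    unfolding F_def by (rule measurable_compose[OF Pm_sub integral_measurable_subprob_algebra[OF gm]])
  have hG: "h \<in> Gf S"
  proof -
    have "h \<in> borel_measurable S" unfolding h_def using Fm by measurable
    moreover have "0 \<le> h z \<and> h z \<le> 1" if z: "z \<in> space S" for z
      using Pm_int_bounds[OF z g] c unfolding h_def F_def a_def by (auto simp: field_simps)
    ultimately show ?thesis by (simp add: Gf_def)
  qed
  have key: "(\<integral>x. g x \<partial>(\<mu>' \<bind> Pm)) = (1 - c) * (\<integral>z. h z \<partial>\<mu>') + a"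
    if mu': "\<mu>' \<in> space (prob_algebra S)" for \<mu>'
  proof -
    interpret prob_space \<mu>' using mu' by (simp add: space_prob_algebra)
    have sm: "sets \<mu>' = sets S" using mu' by (simp add: space_prob_algebra)
    have sp: "space \<mu>' = space S" using sets_eq_imp_space_eq[OF sm] .
    have "(\<integral>x. g x \<partial>(\<mu>' \<bind> Pm)) = (\<integral>z. F z \<partial>\<mu>')"
      unfolding F_def by (rule bind_Pm_int[OF mu' g])
    also have "\<dots> = (\<integral>z. (1 - c) * h z + a \<partial>\<mu>')"
    proof -
      have "\<And>z. F z = (1 - c) * h z + a" using c by (simp add: h_def field_simps)
      then show ?thesis by simp
    qed
    also have "\<dots> = (1 - c) * (\<integral>z. h z \<partial>\<mu>') + a"
      using int_Gf_integrable[OF mu' hG] by (simp add: prob_space)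
    finally show ?thesis .
  qed
  have "\<bar>(\<integral>x. g x \<partial>(\<mu> \<bind> Pm)) - (\<integral>x. g x \<partial>(\<nu>0 \<bind> Pm))\<bar>
        = (1 - c) * \<bar>(\<integral>z. h z \<partial>\<mu>) - (\<integral>z. h z \<partial>\<nu>0)\<bar>"
    using key[OF mu] key[OF nu0] c by (simp add: abs_mult right_diff_distrib[symmetric])
  also have "\<dots> \<le> (1 - c) * dst S \<mu> \<nu>0"
    using dst_upper[OF mu nu0 hG] c by (intro mult_left_mono) auto
  finally show "\<bar>(\<integral>x. g x \<partial>(\<mu> \<bind> Pm)) - (\<integral>x. g x \<partial>(\<nu>0 \<bind> Pm))\<bar> \<le> (1 - c) * dst S \<mu> \<nu>0" .
qed

end

lemma ennreal_suminf_split_head: "(\<Sum>n. f n :: ennreal) = f 0 + (\<Sum>n. f (Suc n))"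
  using sums_unique[OF sums_Suc[OF summable_sums[OF summableI[of "\<lambda>n. f (Suc n)"]]]]
  by (simp add: add.commute)

context doeblin
begin

definition "R z = scale_measure (ennreal (1 / (1 - c))) (diff_measure (Pm z) \<nu>)"
definition "nuN = scale_measure (ennreal (1 / c)) \<nu>"
definition "Q k = nuN \<bind> kernel_pow S R k"
definition "G = measure_pmf (geometric_pmf c)"
definition "pim = G \<bind> Q"

lemma R_sets: "sets (R z) = sets S" if "z \<in> space S"
  using Pm_prob(2)[OF that] by (simp add: R_def)

lemma R_space: "space (R z) = space S" if "z \<in> space S"
  using sets_eq_imp_space_eq[OF R_sets[OF that]] .

lemma R_em:
  assumes z: "z \<in> space S" and A: "A \<in> sets S"
  shows "emeasure (R z) A = ennreal (1 / (1 - c)) * (emeasure (Pm z) A - emeasure \<nu> A)"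
proof -
  interpret Q: prob_space "Pm z" using Pm_prob[OF z] by simp
  have "emeasure (diff_measure (Pm z) \<nu>) A = emeasure (Pm z) A - emeasure \<nu> A"
    using Pm_prob(2)[OF z] nu_sets minor[OF z] A
    by (intro emeasure_diff_measure Q.finite_measure_axioms nu_fin) auto
  then show ?thesis by (simp add: R_def)
qed

lemma Pm_decomp:
  assumes z: "z \<in> space S" and A: "A \<in> sets S"
  shows "emeasure (Pm z) A = emeasure \<nu> A + ennreal (1 - c) * emeasure (R z) A"
proof -
  have "ennreal (1 - c) * ennreal (1 / (1 - c)) = 1"
    using c by (simp flip: ennreal_mult)
  then have "ennreal (1 - c) * emeasure (R z) A = emeasure (Pm z) A - emeasure \<nu> A"
    unfolding R_em[OF z A] by (simp add: mult.assoc[symmetric])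
  then show ?thesis by (subst \<open>ennreal (1 - c) * emeasure (R z) A = _\<close>) (rule add_diff_inverse_ennreal[OF minor[OF z A], symmetric])
qed

lemma R_prob: "prob_space (R z)" if z: "z \<in> space S"
proof
  have "emeasure (Pm z) (space S) = 1"
    using prob_space.emeasure_space_1[OF Pm_prob(1)[OF z], unfolded sets_eq_imp_space_eq[OF Pm_prob(2)[OF z]]] .
  then have "emeasure (R z) (space S) = ennreal (1 / (1 - c)) * (1 - ennreal c)"
    using R_em[OF z sets.top] nu_sp by simp
  also have "\<dots> = 1"
    using c by (simp add: ennreal_minus flip: ennreal_1 ennreal_mult)
  finally show "emeasure (R z) (space (R z)) = 1" using R_space[OF z] by simp
qed

lemma R_meas: "R \<in> S \<rightarrow>\<^sub>M prob_algebra S"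
proof (rule measurable_prob_algebraI)
  show "\<And>x. x \<in> space S \<Longrightarrow> prob_space (R x)" by (rule R_prob)
  show "R \<in> S \<rightarrow>\<^sub>M subprob_algebra S"
  proof (rule measurable_subprob_algebra)
    show "\<And>a. a \<in> space S \<Longrightarrow> subprob_space (R a)" using R_prob prob_space_imp_subprob_space by blast
    show "\<And>a. a \<in> space S \<Longrightarrow> sets (R a) = sets S" by (rule R_sets)
    fix A assume A: "A \<in> sets S"
    have "(\<lambda>z. ennreal (1 / (1 - c)) * (emeasure (Pm z) A - emeasure \<nu> A)) \<in> borel_measurable S"
      using measurable_emeasure_kernel[OF Pm_sub A] by measurable
    then show "(\<lambda>z. emeasure (R z) A) \<in> borel_measurable S"
      by (rule measurable_cong[THEN iffD1, rotated]) (simp add: R_em[OF _ A])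
  qed
qed

lemma R_sub: "R \<in> S \<rightarrow>\<^sub>M subprob_algebra S"
  using R_meas measurable_prob_algebraD by blast

lemma nuN_prob: "nuN \<in> space (prob_algebra S)"
proof -
  have "emeasure nuN (space nuN) = 1"
    using c by (simp add: nuN_def space_scale_measure nu_space nu_sp flip: ennreal_mult)
  then show ?thesis by (simp add: space_prob_algebra nuN_def nu_sets prob_spaceI)
qed

lemma Q_prob: "Q k \<in> space (prob_algebra S)"
  unfolding Q_def
  using prob_space_bind'[OF nuN_prob kernel_pow_meas[OF R_meas]]
        sets_bind'[OF nuN_prob kernel_pow_meas[OF R_meas]]
  by (simp add: space_prob_algebra)

lemma Q_Suc: "Q (Suc k) = Q k \<bind> R"
proof -
  have sn: "sets nuN = sets S" using nuN_prob by (simp add: space_prob_algebra)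
  have "kernel_pow S R (Suc k) = (\<lambda>x. kernel_pow S R k x \<bind> R)" by (rule ext) simp
  with bind_assoc_S[OF sn kernel_pow_sub[OF R_meas] R_sub]
  show ?thesis by (simp add: Q_def)
qed

lemma Q_0: "Q 0 = nuN"
proof -
  have "kernel_pow S R 0 = return S" by (rule ext) simp
  then show ?thesis using nuN_prob by (simp add: Q_def bind_return'' space_prob_algebra)
qed

lemma G_prob: "G \<in> space (prob_algebra G)"
  by (simp add: G_def space_prob_algebra prob_space_measure_pmf)

lemma Q_meas: "Q \<in> G \<rightarrow>\<^sub>M prob_algebra S"
  using Q_prob by (simp add: G_def)

lemma pim_prob: "pim \<in> space (prob_algebra S)"
  unfolding pim_def
  using prob_space_bind'[OF G_prob Q_meas] sets_bind'[OF G_prob Q_meas]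
  by (simp add: space_prob_algebra)

lemma pim_inv_m: "pim \<bind> Pm = pim"
proof (rule measure_eqI)
  show "sets (pim \<bind> Pm) = sets pim"
    using sets_bind'[OF pim_prob kernel_pow_meas[OF P]] pim_prob by (simp add: space_prob_algebra)
  fix A assume "A \<in> sets (pim \<bind> Pm)"
  then have A: "A \<in> sets S"
    using sets_bind'[OF pim_prob kernel_pow_meas[OF P]] by simp
  have Qsub: "Q \<in> G \<rightarrow>\<^sub>M subprob_algebra S" using Q_meas measurable_prob_algebraD by blast
  have inner: "(\<integral>\<^sup>+z. emeasure (Pm z) A \<partial>Q k) = emeasure \<nu> A + ennreal (1 - c) * emeasure (Q (Suc k)) A" for k
  proof -
    have sQ: "sets (Q k) = sets S" using Q_prob by (simp add: space_prob_algebra)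
    have spQ: "space (Q k) = space S" using sets_eq_imp_space_eq[OF sQ] .
    interpret QQ: prob_space "Q k" using Q_prob by (simp add: space_prob_algebra)
    have Rm: "(\<lambda>z. emeasure (R z) A) \<in> borel_measurable (Q k)"
      using measurable_emeasure_kernel[OF R_sub A] unfolding measurable_cong_sets[OF sQ refl] .
    have "(\<integral>\<^sup>+z. emeasure (Pm z) A \<partial>Q k) = (\<integral>\<^sup>+z. emeasure \<nu> A + ennreal (1 - c) * emeasure (R z) A \<partial>Q k)"
      by (intro nn_integral_cong) (simp add: spQ Pm_decomp[OF _ A])
    also have "\<dots> = emeasure \<nu> A + ennreal (1 - c) * (\<integral>\<^sup>+z. emeasure (R z) A \<partial>Q k)"
      using Rm by (simp add: nn_integral_add nn_integral_cmult QQ.emeasure_space_1)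
    also have "(\<integral>\<^sup>+z. emeasure (R z) A \<partial>Q k) = emeasure (Q (Suc k)) A"
      unfolding Q_Suc by (rule emeasure_bind_prob_algebra[OF Q_prob R_meas A, symmetric])
    finally show ?thesis .
  qed
  have "emeasure (pim \<bind> Pm) A = (\<integral>\<^sup>+z. emeasure (Pm z) A \<partial>pim)"
    by (rule emeasure_bind_prob_algebra[OF pim_prob kernel_pow_meas[OF P] A])
  also have "\<dots> = (\<integral>\<^sup>+k. \<integral>\<^sup>+z. emeasure (Pm z) A \<partial>Q k \<partial>G)"
    unfolding pim_def by (rule nn_integral_bind[OF measurable_emeasure_kernel[OF Pm_sub A] Qsub])
  also have "\<dots> = (\<integral>\<^sup>+k. emeasure \<nu> A + ennreal (1 - c) * emeasure (Q (Suc k)) A \<partial>G)"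
    by (simp add: inner)
  also have "\<dots> = emeasure \<nu> A + (\<integral>\<^sup>+k. ennreal (1 - c) * emeasure (Q (Suc k)) A \<partial>G)"
    by (simp add: nn_integral_add G_def measure_pmf.emeasure_space_1)
  also have "\<dots> = (\<integral>\<^sup>+k. emeasure (Q k) A \<partial>G)"
  proof -
    have e1: "(\<integral>\<^sup>+k. emeasure (Q k) A \<partial>G) = (\<Sum>k. ennreal (pmf (geometric_pmf c) k) * emeasure (Q k) A)"
      by (simp add: G_def nn_integral_measure_pmf nn_integral_count_space_nat)
    have e2: "(\<integral>\<^sup>+k. ennreal (1 - c) * emeasure (Q (Suc k)) A \<partial>G)
        = (\<Sum>k. ennreal (pmf (geometric_pmf c) (Suc k)) * emeasure (Q (Suc k)) A)"
    proof -
      have "(\<integral>\<^sup>+k. ennreal (1 - c) * emeasure (Q (Suc k)) A \<partial>G)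
         = (\<Sum>k. ennreal (pmf (geometric_pmf c) k) * (ennreal (1 - c) * emeasure (Q (Suc k)) A))"
        by (simp add: G_def nn_integral_measure_pmf nn_integral_count_space_nat)
      also have "\<dots> = (\<Sum>k. ennreal (pmf (geometric_pmf c) (Suc k)) * emeasure (Q (Suc k)) A)"
        using c by (intro suminf_cong) (simp add: mult.assoc[symmetric] mult.commute ennreal_mult[symmetric])
      finally show ?thesis .
    qed
    have e3: "ennreal (pmf (geometric_pmf c) 0) * emeasure (Q 0) A = emeasure \<nu> A"
      using c by (simp add: Q_0 nuN_def mult.assoc[symmetric] ennreal_mult[symmetric])
    show ?thesis
      unfolding e1 e2 by (subst ennreal_suminf_split_head) (simp add: e3)
  qed
  also have "\<dots> = emeasure pim A"
    unfolding pim_def by (rule emeasure_bind_prob_algebra[OF G_prob Q_meas A, symmetric])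
  finally show "emeasure (pim \<bind> Pm) A = emeasure pim A" .
qed

end

context doeblin
begin

lemma S_nonempty_sets: "sets S \<noteq> {}" by auto

lemma kp1: "z \<in> space S \<Longrightarrow> kernel_pow S P 1 z = P z"
  using bind_return[OF measurable_prob_algebraD[OF P]] by simp

lemma bind_kp1: "\<mu> \<in> space (prob_algebra S) \<Longrightarrow> \<mu> \<bind> kernel_pow S P 1 = \<mu> \<bind> P"
proof (rule bind_cong[OF refl])
  fix z assume "\<mu> \<in> space (prob_algebra S)" "z \<in> space \<mu>"
  then have "z \<in> space S" using sets_eq_imp_space_eq[of \<mu> S] by (simp add: space_prob_algebra)
  then show "kernel_pow S P 1 z = P z" by (rule kp1)
qed

lemma prob_bindP: "\<mu> \<in> space (prob_algebra S) \<Longrightarrow> (\<mu> \<bind> K) \<in> space (prob_algebra S)"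
  if "K \<in> S \<rightarrow>\<^sub>M prob_algebra S" for K
  using prob_space_bind'[OF _ that, of \<mu>] sets_bind'[OF _ that, of \<mu>]
  by (simp add: space_prob_algebra)

lemma uniq_m:
  assumes mu: "\<mu> \<in> space (prob_algebra S)" and inv: "\<mu> \<bind> Pm = \<mu>"
  shows "\<mu> = pim"
proof -
  have "dst S \<mu> pim \<le> (1 - c) * dst S \<mu> pim"
    using contract[OF mu pim_prob] unfolding inv pim_inv_m .
  with c dst_nonneg[OF mu pim_prob] have "dst S \<mu> pim \<le> 0"
    by (smt (verit) mult_le_cancel_right1)
  with tv_le_dst[OF mu pim_prob] have "tv_dist \<mu> pim \<le> 0" by simp
  then show ?thesis by (rule eq_of_tv0[OF mu pim_prob])
qed

lemma inv_pow:
  assumes mu: "\<mu> \<in> space (prob_algebra S)" and inv: "\<mu> \<bind> P = \<mu>"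
  shows "\<mu> \<bind> kernel_pow S P n = \<mu>"
proof (induction n)
  case 0
  have "kernel_pow S P 0 = return S" by (rule ext) simp
  then show ?case using mu by (simp add: bind_return'' space_prob_algebra)
next
  case (Suc n)
  have sm: "sets \<mu> = sets S" using mu by (simp add: space_prob_algebra)
  have "\<mu> \<bind> kernel_pow S P (n + 1) = (\<mu> \<bind> kernel_pow S P n) \<bind> kernel_pow S P 1"
    by (rule bind_kernel_pow_add[OF P sm])
  also have "\<dots> = \<mu>" using Suc bind_kp1[OF mu] inv by simp
  finally show ?case by (simp only: Suc_eq_plus1)
qed

lemma pim_inv: "pim \<bind> P = pim"
proof -
  have sp: "sets pim = sets S" using pim_prob by (simp add: space_prob_algebra)
  have pP: "pim \<bind> P \<in> space (prob_algebra S)" by (rule prob_bindP[OF P pim_prob])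
  have "(pim \<bind> P) \<bind> Pm = (pim \<bind> kernel_pow S P 1) \<bind> Pm"
    using bind_kp1[OF pim_prob] by simp
  also have "\<dots> = pim \<bind> kernel_pow S P (1 + m)"
    by (rule bind_kernel_pow_add[OF P sp, symmetric])
  also have "\<dots> = pim \<bind> kernel_pow S P (m + 1)" by (simp add: add.commute)
  also have "\<dots> = (pim \<bind> Pm) \<bind> kernel_pow S P 1"
    by (rule bind_kernel_pow_add[OF P sp])
  also have "\<dots> = pim \<bind> P" using pim_inv_m bind_kp1[OF pim_prob] by simp
  finally show ?thesis using uniq_m[OF pP] by simp
qed

lemma conv_k:
  assumes z: "z \<in> space S"
  shows "dst S (kernel_pow S P (r + k * m) z) pim \<le> (1 - c) ^ k"
proof (induction k)
  case 0
  show ?case using dst_le1[OF kernel_pow_space[OF P z] pim_prob] by simp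
next
  case (Suc k)
  have "kernel_pow S P (r + Suc k * m) z = kernel_pow S P ((r + k * m) + m) z"
    by (simp add: algebra_simps)
  also have "\<dots> = kernel_pow S P (r + k * m) z \<bind> Pm"
    by (rule kernel_pow_add[OF P z])
  finally have e: "kernel_pow S P (r + Suc k * m) z = kernel_pow S P (r + k * m) z \<bind> Pm" .
  have "dst S (kernel_pow S P (r + Suc k * m) z) pim
      = dst S (kernel_pow S P (r + k * m) z \<bind> Pm) (pim \<bind> Pm)"
    using e pim_inv_m by simp
  also have "\<dots> \<le> (1 - c) * dst S (kernel_pow S P (r + k * m) z) pim"
    by (rule contract[OF kernel_pow_space[OF P z] pim_prob])
  also have "\<dots> \<le> (1 - c) * (1 - c) ^ k"
    using Suc c by (intro mult_left_mono) auto
  finally show ?case by simp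
qed

lemma rate:
  fixes n :: nat
  defines "\<rho> \<equiv> root m (1 - c)"
  shows "(1 - c) ^ (n div m) \<le> (1 / (1 - c)) * \<rho> ^ n"
proof -
  have rpos: "0 < \<rho>" using c m by (simp add: \<rho>_def)
  have rle: "\<rho> \<le> 1" using c m by (simp add: \<rho>_def)
  have rm: "\<rho> ^ m = 1 - c" using c m by (simp add: \<rho>_def real_root_pow_pos2)
  have "n \<le> m * (n div m) + m"
    using m by (metis add_le_cancel_left div_mult_mod_eq le_add1 mod_less_divisor mult.commute less_imp_le_nat trans_le_add1 nat_add_left_cancel_le)
  then have "\<rho> ^ (m * (n div m) + m) \<le> \<rho> ^ n"
    using rpos rle by (intro power_decreasing) auto
  also have "\<rho> ^ (m * (n div m) + m) = (1 - c) ^ (n div m) * (1 - c)"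
    by (simp add: power_add power_mult rm)
  finally have "(1 - c) ^ (n div m) * (1 - c) \<le> \<rho> ^ n" .
  then show ?thesis using c by (simp add: field_simps)
qed

theorem ergodic: "exp_ergodic S P"
  unfolding exp_ergodic_def
proof (intro exI conjI allI impI)
  show "prob_space pim" "sets pim = sets S" using pim_prob by (auto simp: space_prob_algebra)
  show "pim \<bind> P = pim" by (rule pim_inv)
  fix \<mu> assume "prob_space \<mu> \<and> sets \<mu> = sets S \<and> \<mu> \<bind> P = \<mu>"
  then have mu: "\<mu> \<in> space (prob_algebra S)" and inv: "\<mu> \<bind> P = \<mu>" by (auto simp: space_prob_algebra)
  show "\<mu> = pim" by (rule uniq_m[OF mu inv_pow[OF mu inv]])
next
  show "0 \<le> root m (1 - c)" using c m by simp
  show "root m (1 - c) < 1" using c m by simp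
  show "\<forall>z\<in>space S. \<exists>C. \<forall>n. tv_dist (kernel_pow S P n z) pim \<le> C * root m (1 - c) ^ n"
  proof (intro ballI exI allI)
    fix z n assume z: "z \<in> space S"
    have "tv_dist (kernel_pow S P n z) pim \<le> dst S (kernel_pow S P n z) pim"
      by (rule tv_le_dst[OF kernel_pow_space[OF P z] pim_prob])
    also have "\<dots> = dst S (kernel_pow S P (n mod m + (n div m) * m) z) pim"
      by simp
    also have "\<dots> \<le> (1 - c) ^ (n div m)" by (rule conv_k[OF z])
    also have "\<dots> \<le> (1 / (1 - c)) * root m (1 - c) ^ n" by (rule rate)
    finally show "tv_dist (kernel_pow S P n z) pim \<le> (1 / (1 - c)) * root m (1 - c) ^ n" .
  qed
qed

end

lemma space_bspace[simp]: "space (bspace X) = X"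
  by (simp add: bspace_def space_restrict_space)

lemma mem_shift_meas[measurable]:
  assumes [measurable]: "f \<in> M \<rightarrow>\<^sub>M mem_space N MY MU" "g \<in> M \<rightarrow>\<^sub>M MY" "k \<in> M \<rightarrow>\<^sub>M MU"
  shows "(\<lambda>w. mem_shift N (f w) (g w) (k w)) \<in> M \<rightarrow>\<^sub>M mem_space N MY MU"
proof -
  have f1[measurable]: "(\<lambda>w. fst (f w)) \<in> M \<rightarrow>\<^sub>M PiM {..N} (\<lambda>_. MY)"
    using assms(1) unfolding mem_space_def by measurable
  have f2[measurable]: "(\<lambda>w. snd (f w)) \<in> M \<rightarrow>\<^sub>M PiM {1..N} (\<lambda>_. MU)"
    using assms(1) unfolding mem_space_def by measurable
  show ?thesis
    unfolding mem_shift_def mem_space_def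
  proof (intro measurable_Pair measurable_restrict)
    fix i assume i: "i \<in> {..N}"
    show "(\<lambda>w. if i = 0 then g w else fst (f w) (i - 1)) \<in> M \<rightarrow>\<^sub>M MY"
    proof (cases "i = 0")
      case False
      then have "i - 1 \<in> {..N}" using i by auto
      then show ?thesis using False by simp
    qed simp
  next
    fix j assume j: "j \<in> {1..N}"
    show "(\<lambda>w. if j = 1 then k w else snd (f w) (j - 1)) \<in> M \<rightarrow>\<^sub>M MU"
    proof (cases "j = 1")
      case False
      then have "j - 1 \<in> {1..N}" using j by auto
      then show ?thesis using False by simp
    qed simp
  qed
qed

lemma bind_le:
  assumes sM': "sets M' = sets M0" and sM: "sets M = sets M0"
    and K': "K' \<in> M0 \<rightarrow>\<^sub>M subprob_algebra N" and K: "K \<in> M0 \<rightarrow>\<^sub>M subprob_algebra N"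
    and le1: "\<And>A. A \<in> sets M0 \<Longrightarrow> emeasure M' A \<le> emeasure M A"
    and le2: "\<And>z A. z \<in> space M0 \<Longrightarrow> A \<in> sets N \<Longrightarrow> emeasure (K' z) A \<le> emeasure (K z) A"
    and A: "A \<in> sets N"
  shows "emeasure (M' \<bind> K') A \<le> emeasure (M \<bind> K) A"
proof (cases "space M0 = {}")
  case True
  then have "space M' = {}" using sets_eq_imp_space_eq[OF sM'] by simp
  have "emeasure (count_space {}) A = 0" by (cases "A = {}") (auto simp: emeasure_notin_sets)
  with \<open>space M' = {}\<close> show ?thesis by (simp add: bind_empty)
next
  case False
  have spM': "space M' = space M0" using sets_eq_imp_space_eq[OF sM'] .
  have spM: "space M = space M0" using sets_eq_imp_space_eq[OF sM] .
  have K'': "K' \<in> M' \<rightarrow>\<^sub>M subprob_algebra N" using K' unfolding measurable_cong_sets[OF sM' refl] .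
  have K2: "K \<in> M' \<rightarrow>\<^sub>M subprob_algebra N" using K unfolding measurable_cong_sets[OF sM' refl] .
  have K3: "K \<in> M \<rightarrow>\<^sub>M subprob_algebra N" using K unfolding measurable_cong_sets[OF sM refl] .
  have "emeasure (M' \<bind> K') A = (\<integral>\<^sup>+z. emeasure (K' z) A \<partial>M')"
    using False spM' by (intro emeasure_bind[OF _ K'' A]) auto
  also have "\<dots> \<le> (\<integral>\<^sup>+z. emeasure (K z) A \<partial>M')"
    using le2 A spM' by (intro nn_integral_mono) auto
  also have "\<dots> \<le> (\<integral>\<^sup>+z. emeasure (K z) A \<partial>M)"
  proof (rule nn_integral_mono_measure)
    show "sets M' = sets M" using sM sM' by simp
    have "emeasure M' B \<le> emeasure M B" for B
      using le1[of B] sM sM' by (cases "B \<in> sets M0") (auto simp: emeasure_notin_sets)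
    then show "M' \<le> M" using sM sM' spM spM' by (simp add: le_measure_iff le_fun_def)
  qed
  also have "\<dots> = emeasure (M \<bind> K) A"
    using False spM by (intro emeasure_bind[OF _ K3 A, symmetric]) auto
  finally show ?thesis .
qed

locale fmc =
  fixes X :: "'x::euclidean_space set" and Y :: "'y::euclidean_space set"
    and U :: "'u::euclidean_space set" and N :: nat
    and T :: "'x \<times> 'u \<Rightarrow> 'x measure" and Obs :: "'x \<Rightarrow> 'y measure"
    and \<gamma> :: "(nat \<Rightarrow> 'y) \<times> (nat \<Rightarrow> 'u) \<Rightarrow> 'u measure"
    and lx :: "'x measure" and lu :: "'u measure"
  assumes N: "N \<ge> 1"
    and T[measurable]: "T \<in> bspace X \<Otimes>\<^sub>M bspace U \<rightarrow>\<^sub>M prob_algebra (bspace X)"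
    and Obs[measurable]: "Obs \<in> bspace X \<rightarrow>\<^sub>M prob_algebra (bspace Y)"
    and \<gamma>[measurable]: "\<gamma> \<in> mem_space N (bspace Y) (bspace U) \<rightarrow>\<^sub>M prob_algebra (bspace U)"
    and lx_sets: "sets lx = sets (bspace X)" and lx_nontriv: "emeasure lx X \<noteq> 0"
    and lu_sets: "sets lu = sets (bspace U)" and lu_nontriv: "emeasure lu U \<noteq> 0"
    and T_minor: "\<And>x u A. x \<in> X \<Longrightarrow> u \<in> U \<Longrightarrow> A \<in> sets (bspace X) \<Longrightarrow>
                    emeasure (T (x, u)) A \<ge> emeasure lx A"
    and \<gamma>_minor: "\<And>h A. h \<in> space (mem_space N (bspace Y) (bspace U)) \<Longrightarrow> A \<in> sets (bspace U) \<Longrightarrow>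
                    emeasure (\<gamma> h) A \<ge> emeasure lu A"
begin

abbreviation "MH \<equiv> mem_space N (bspace Y) (bspace U)"
abbreviation "S \<equiv> MH \<Otimes>\<^sub>M bspace X \<Otimes>\<^sub>M bspace U"
abbreviation "P \<equiv> fm_kernel S N T Obs \<gamma>"

lemma P_meas: "P \<in> S \<rightarrow>\<^sub>M prob_algebra S"
  unfolding fm_kernel_def Let_def by measurable

lemma X_ne: "X \<noteq> {}" using lx_nontriv by auto
lemma U_ne: "U \<noteq> {}" using lu_nontriv by auto

lemma lx_space: "space lx = X"
  using sets_eq_imp_space_eq[OF lx_sets] by simp
lemma lu_space: "space lu = U"
  using sets_eq_imp_space_eq[OF lu_sets] by simp

lemma T_prob: "x \<in> X \<Longrightarrow> u \<in> U \<Longrightarrow> prob_space (T (x, u)) \<and> sets (T (x, u)) = sets (bspace X)"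
  using measurable_space[OF T, of "(x, u)"] by (simp add: space_pair_measure space_prob_algebra)

lemma lx_sub: "lx \<in> space (subprob_algebra (bspace X))"
proof -
  obtain x u where xu: "x \<in> X" "u \<in> U" using X_ne U_ne by blast
  have "emeasure lx X \<le> emeasure (T (x, u)) X"
    using T_minor[OF xu, of X] sets.top[of "bspace X"] by simp
  also have "\<dots> = 1"
    using T_prob[OF xu] prob_space.emeasure_space_1[of "T (x,u)"] sets_eq_imp_space_eq[of "T (x,u)" "bspace X"] by simp
  finally show ?thesis
    using X_ne by (auto simp: space_subprob_algebra lx_sets lx_space intro!: subprob_spaceI)
qed

lemma lu_sub: "lu \<in> space (subprob_algebra (bspace U))"
proof -
  obtain h where h: "h \<in> space MH"
  proof -
    obtain y where y: "y \<in> Y"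
    proof -
      obtain x where x: "x \<in> X" using X_ne by blast
      have "prob_space (Obs x)" "sets (Obs x) = sets (bspace Y)"
        using measurable_space[OF Obs, of x] x by (auto simp: space_prob_algebra)
      then have "space (Obs x) = Y" "space (Obs x) \<noteq> {}"
        using sets_eq_imp_space_eq[of "Obs x" "bspace Y"] prob_space.not_empty by auto
      then show thesis using that by blast
    qed
    obtain u where u: "u \<in> U" using U_ne by blast
    have "((\<lambda>i\<in>{..N}. y), (\<lambda>j\<in>{1..N}. u)) \<in> space MH"
      using y u by (simp add: mem_space_def space_pair_measure space_PiM)
    then show thesis by (rule that)
  qed
  have "emeasure lu U \<le> emeasure (\<gamma> h) U"
    using \<gamma>_minor[OF h, of U] sets.top[of "bspace U"] by simp
  also have "\<dots> = 1"
    using measurable_space[OF \<gamma> h] prob_space.emeasure_space_1[of "\<gamma> h"] sets_eq_imp_space_eq[of "\<gamma> h" "bspace U"]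
    by (simp add: space_prob_algebra)
  finally show ?thesis
    using U_ne by (auto simp: space_subprob_algebra lu_sets lu_space intro!: subprob_spaceI)
qed

lemma lx_meas[measurable]: "(\<lambda>_. lx) \<in> M \<rightarrow>\<^sub>M subprob_algebra (bspace X)"
  using lx_sub by simp
lemma lu_meas[measurable]: "(\<lambda>_. lu) \<in> M \<rightarrow>\<^sub>M subprob_algebra (bspace U)"
  using lu_sub by simp

lemma T_sub[measurable]: "T \<in> bspace X \<Otimes>\<^sub>M bspace U \<rightarrow>\<^sub>M subprob_algebra (bspace X)"
  using T measurable_prob_algebraD by blast
lemma Obs_sub[measurable]: "Obs \<in> bspace X \<rightarrow>\<^sub>M subprob_algebra (bspace Y)"
  using Obs measurable_prob_algebraD by blast

lemma gamma_sub[measurable]: "\<gamma> \<in> MH \<rightarrow>\<^sub>M subprob_algebra (bspace U)"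
  using \<gamma> measurable_prob_algebraD by blast

definition "Inn z x' = Obs x' \<bind> (\<lambda>y'. lu \<bind> (\<lambda>u'. return S (mem_shift N (fst z) y' (snd (snd z)), x', u')))"
definition "PInn z x' = Obs x' \<bind> (\<lambda>y'. \<gamma> (mem_shift N (fst z) y' (snd (snd z))) \<bind> (\<lambda>u'. return S (mem_shift N (fst z) y' (snd (snd z)), x', u')))"
definition "K1 z = lx \<bind> Inn z"
definition "K2 z = T (fst (snd z), snd (snd z)) \<bind> Inn z"

lemma P_eq: "P z = T (fst (snd z), snd (snd z)) \<bind> PInn z"
  by (cases z) (simp add: fm_kernel_def PInn_def[abs_def] Let_def)

lemma Inn_meas: "z \<in> space S \<Longrightarrow> Inn z \<in> bspace X \<rightarrow>\<^sub>M subprob_algebra S"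
  unfolding Inn_def by measurable
lemma PInn_meas: "z \<in> space S \<Longrightarrow> PInn z \<in> bspace X \<rightarrow>\<^sub>M subprob_algebra S"
  unfolding PInn_def by measurable

lemma K1_meas: "K1 \<in> S \<rightarrow>\<^sub>M subprob_algebra S"
  unfolding K1_def Inn_def by measurable
lemma K2_meas: "K2 \<in> S \<rightarrow>\<^sub>M subprob_algebra S"
  unfolding K2_def Inn_def by measurable

lemma ms_space: "h \<in> space MH \<Longrightarrow> y \<in> Y \<Longrightarrow> u \<in> U \<Longrightarrow> mem_shift N h y u \<in> space MH"
proof -
  assume a: "h \<in> space MH" "y \<in> Y" "u \<in> U"
  have "(\<lambda>w. mem_shift N (fst w) (fst (snd w)) (snd (snd w))) \<in> MH \<Otimes>\<^sub>M bspace Y \<Otimes>\<^sub>M bspace U \<rightarrow>\<^sub>M MH"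
    by measurable
  from measurable_space[OF this, of "(h, y, u)"] a show ?thesis by (simp add: space_pair_measure)
qed

lemma S_space: "z \<in> space S \<Longrightarrow> fst z \<in> space MH \<and> fst (snd z) \<in> X \<and> snd (snd z) \<in> U"
  by (auto simp: space_pair_measure)

lemma Inn_le:
  assumes z: "z \<in> space S" and x: "x' \<in> X" and A: "A \<in> sets S"
  shows "emeasure (Inn z x') A \<le> emeasure (PInn z x') A"
  unfolding Inn_def PInn_def
proof (rule bind_le[of "Obs x'" "bspace Y" "Obs x'"])
  show "sets (Obs x') = sets (bspace Y)" "sets (Obs x') = sets (bspace Y)"
    using measurable_space[OF Obs, of x'] x by (auto simp: space_prob_algebra)
  have zx: "(z, x') \<in> space (S \<Otimes>\<^sub>M bspace X)" using z x by (simp add: space_pair_measure)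
  have J1: "(\<lambda>w. lu \<bind> (\<lambda>u'. return S (mem_shift N (fst (fst (fst w))) (snd w) (snd (snd (fst (fst w)))), snd (fst w), u')))
     \<in> (S \<Otimes>\<^sub>M bspace X) \<Otimes>\<^sub>M bspace Y \<rightarrow>\<^sub>M subprob_algebra S"
    by measurable
  from measurable_Pair2[OF J1 zx]
  show "(\<lambda>y'. lu \<bind> (\<lambda>u'. return S (mem_shift N (fst z) y' (snd (snd z)), x', u'))) \<in> bspace Y \<rightarrow>\<^sub>M subprob_algebra S"
    by (simp only: fst_conv snd_conv)
  have J2: "(\<lambda>w. \<gamma> (mem_shift N (fst (fst (fst w))) (snd w) (snd (snd (fst (fst w))))) \<bind> (\<lambda>u'. return S (mem_shift N (fst (fst (fst w))) (snd w) (snd (snd (fst (fst w)))), snd (fst w), u')))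
     \<in> (S \<Otimes>\<^sub>M bspace X) \<Otimes>\<^sub>M bspace Y \<rightarrow>\<^sub>M subprob_algebra S"
    by measurable
  from measurable_Pair2[OF J2 zx]
  show "(\<lambda>y'. \<gamma> (mem_shift N (fst z) y' (snd (snd z))) \<bind> (\<lambda>u'. return S (mem_shift N (fst z) y' (snd (snd z)), x', u'))) \<in> bspace Y \<rightarrow>\<^sub>M subprob_algebra S"
    by (simp only: fst_conv snd_conv)
  show "\<And>B. B \<in> sets (bspace Y) \<Longrightarrow> emeasure (Obs x') B \<le> emeasure (Obs x') B" by simp
  show "A \<in> sets S" by fact
  fix y B assume y: "y \<in> space (bspace Y)" and B: "B \<in> sets S"
  have hs: "mem_shift N (fst z) y (snd (snd z)) \<in> space MH"
    using S_space[OF z] y by (intro ms_space) auto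
  show "emeasure (lu \<bind> (\<lambda>u'. return S (mem_shift N (fst z) y (snd (snd z)), x', u'))) B
     \<le> emeasure (\<gamma> (mem_shift N (fst z) y (snd (snd z))) \<bind> (\<lambda>u'. return S (mem_shift N (fst z) y (snd (snd z)), x', u'))) B"
  proof (rule bind_le[of lu "bspace U" "\<gamma> (mem_shift N (fst z) y (snd (snd z)))"])
    show "sets lu = sets (bspace U)" by (rule lu_sets)
    show "sets (\<gamma> (mem_shift N (fst z) y (snd (snd z)))) = sets (bspace U)"
      using measurable_space[OF \<gamma> hs] by (simp add: space_prob_algebra)
    have zxy: "((z, x'), y) \<in> space ((S \<Otimes>\<^sub>M bspace X) \<Otimes>\<^sub>M bspace Y)" using z x y by (simp add: space_pair_measure)
    have J3: "(\<lambda>w. return S (mem_shift N (fst (fst (fst (fst w)))) (snd (fst w)) (snd (snd (fst (fst (fst w))))), snd (fst (fst w)), snd w))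
       \<in> ((S \<Otimes>\<^sub>M bspace X) \<Otimes>\<^sub>M bspace Y) \<Otimes>\<^sub>M bspace U \<rightarrow>\<^sub>M subprob_algebra S"
      by measurable
    from measurable_Pair2[OF J3 zxy]
    show "(\<lambda>u'. return S (mem_shift N (fst z) y (snd (snd z)), x', u')) \<in> bspace U \<rightarrow>\<^sub>M subprob_algebra S"
      by (simp only: fst_conv snd_conv)
    then show "(\<lambda>u'. return S (mem_shift N (fst z) y (snd (snd z)), x', u')) \<in> bspace U \<rightarrow>\<^sub>M subprob_algebra S" .
    show "\<And>A. A \<in> sets (bspace U) \<Longrightarrow> emeasure lu A \<le> emeasure (\<gamma> (mem_shift N (fst z) y (snd (snd z)))) A"
      by (rule \<gamma>_minor[OF hs])
    show "\<And>w C. w \<in> space (bspace U) \<Longrightarrow> C \<in> sets S \<Longrightarrow> emeasure (return S (mem_shift N (fst z) y (snd (snd z)), x', w)) C \<le> emeasure (return S (mem_shift N (fst z) y (snd (snd z)), x', w)) C"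
      by simp
    show "B \<in> sets S" by fact
  qed
qed

end

context fmc
begin

lemma sec1:
  assumes z: "z \<in> space S" and x: "x' \<in> X"
  shows "(\<lambda>y'. lu \<bind> (\<lambda>u'. return S (mem_shift N (fst z) y' (snd (snd z)), x', u'))) \<in> bspace Y \<rightarrow>\<^sub>M subprob_algebra S"
proof -
  have zx: "(z, x') \<in> space (S \<Otimes>\<^sub>M bspace X)" using z x by (simp add: space_pair_measure)
  have J1: "(\<lambda>w. lu \<bind> (\<lambda>u'. return S (mem_shift N (fst (fst (fst w))) (snd w) (snd (snd (fst (fst w)))), snd (fst w), u')))
     \<in> (S \<Otimes>\<^sub>M bspace X) \<Otimes>\<^sub>M bspace Y \<rightarrow>\<^sub>M subprob_algebra S"
    by measurable
  from measurable_Pair2[OF J1 zx] show ?thesis by (simp only: fst_conv snd_conv)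
qed

lemma sec3:
  assumes z: "z \<in> space S" and x: "x' \<in> X" and y: "y \<in> Y"
  shows "(\<lambda>u'. return S (mem_shift N (fst z) y (snd (snd z)), x', u')) \<in> bspace U \<rightarrow>\<^sub>M subprob_algebra S"
proof -
  have zxy: "((z, x'), y) \<in> space ((S \<Otimes>\<^sub>M bspace X) \<Otimes>\<^sub>M bspace Y)" using z x y by (simp add: space_pair_measure)
  have J3: "(\<lambda>w. return S (mem_shift N (fst (fst (fst (fst w)))) (snd (fst w)) (snd (snd (fst (fst (fst w))))), snd (fst (fst w)), snd w))
     \<in> ((S \<Otimes>\<^sub>M bspace X) \<Otimes>\<^sub>M bspace Y) \<Otimes>\<^sub>M bspace U \<rightarrow>\<^sub>M subprob_algebra S"
    by measurable
  from measurable_Pair2[OF J3 zxy] show ?thesis by (simp only: fst_conv snd_conv)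
qed

lemma T_sets: "z \<in> space S \<Longrightarrow> sets (T (fst (snd z), snd (snd z))) = sets (bspace X)"
  using T_prob S_space by blast

lemma P_sub: "P \<in> S \<rightarrow>\<^sub>M subprob_algebra S"
  using P_meas measurable_prob_algebraD by blast

lemma K2_le: "z \<in> space S \<Longrightarrow> A \<in> sets S \<Longrightarrow> emeasure (K2 z) A \<le> emeasure (P z) A"
  unfolding K2_def P_eq
  by (rule bind_le[OF T_sets T_sets Inn_meas PInn_meas _ Inn_le]) auto

lemma K1_le: "z \<in> space S \<Longrightarrow> A \<in> sets S \<Longrightarrow> emeasure (K1 z) A \<le> emeasure (P z) A"
  unfolding K1_def P_eq
  by (rule bind_le[OF lx_sets T_sets Inn_meas PInn_meas _ Inn_le])
     (use S_space[of z] T_minor[of "fst (snd z)" "snd (snd z)"] in auto)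

lemma push:
  assumes M0: "sets M0 = sets (bspace X)" and a: "a \<in> space S" and b: "b \<in> space S" and g: "g \<in> S \<rightarrow>\<^sub>M S"
    and eq: "\<And>x' y u. x' \<in> X \<Longrightarrow> y \<in> Y \<Longrightarrow> u \<in> U \<Longrightarrow>
       g (mem_shift N (fst a) y (snd (snd a)), x', u) = (mem_shift N (fst b) y (snd (snd b)), x', u)"
  shows "(M0 \<bind> Inn a) \<bind> (\<lambda>w. return S (g w)) = M0 \<bind> Inn b"
proof -
  have rg: "(\<lambda>w. return S (g w)) \<in> S \<rightarrow>\<^sub>M subprob_algebra S"
    by (rule measurable_compose[OF g return_measurable])
  have "(M0 \<bind> Inn a) \<bind> (\<lambda>w. return S (g w)) = M0 \<bind> (\<lambda>x'. Inn a x' \<bind> (\<lambda>w. return S (g w)))"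
    by (rule bind_assoc_S[OF M0 Inn_meas[OF a] rg])
  also have "\<dots> = M0 \<bind> Inn b"
  proof (rule bind_cong[OF refl])
    fix x' assume "x' \<in> space M0"
    then have x: "x' \<in> X" using sets_eq_imp_space_eq[OF M0] by simp
    have sO: "sets (Obs x') = sets (bspace Y)"
      using measurable_space[OF Obs, of x'] x by (auto simp: space_prob_algebra)
    have "Inn a x' \<bind> (\<lambda>w. return S (g w))
       = Obs x' \<bind> (\<lambda>y. (lu \<bind> (\<lambda>u'. return S (mem_shift N (fst a) y (snd (snd a)), x', u'))) \<bind> (\<lambda>w. return S (g w)))"
      unfolding Inn_def by (rule bind_assoc_S[OF sO sec1[OF a x] rg])
    also have "\<dots> = Obs x' \<bind> (\<lambda>y. lu \<bind> (\<lambda>u'. return S (mem_shift N (fst b) y (snd (snd b)), x', u')))"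
    proof (rule bind_cong[OF refl])
      fix y assume "y \<in> space (Obs x')"
      then have y: "y \<in> Y" using sets_eq_imp_space_eq[OF sO] by simp
      have "(lu \<bind> (\<lambda>u'. return S (mem_shift N (fst a) y (snd (snd a)), x', u'))) \<bind> (\<lambda>w. return S (g w))
          = lu \<bind> (\<lambda>u'. return S (mem_shift N (fst a) y (snd (snd a)), x', u') \<bind> (\<lambda>w. return S (g w)))"
        by (rule bind_assoc_S[OF lu_sets sec3[OF a x y] rg])
      also have "\<dots> = lu \<bind> (\<lambda>u'. return S (mem_shift N (fst b) y (snd (snd b)), x', u'))"
      proof (rule bind_cong[OF refl])
        fix u assume "u \<in> space lu"
        then have u: "u \<in> U" using lu_space by simp
        have "(mem_shift N (fst a) y (snd (snd a)), x', u) \<in> space S"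
          using ms_space[of "fst a" y "snd (snd a)"] S_space[OF a] x y u by (simp add: space_pair_measure)
        from bind_return[OF rg this] eq[OF x y u]
        show "return S (mem_shift N (fst a) y (snd (snd a)), x', u) \<bind> (\<lambda>w. return S (g w))
            = return S (mem_shift N (fst b) y (snd (snd b)), x', u)" by simp
      qed
      finally show "(lu \<bind> (\<lambda>u'. return S (mem_shift N (fst a) y (snd (snd a)), x', u'))) \<bind> (\<lambda>w. return S (g w))
          = lu \<bind> (\<lambda>u'. return S (mem_shift N (fst b) y (snd (snd b)), x', u'))" .
    qed
    also have "\<dots> = Inn b x'" by (simp add: Inn_def)
    finally show "Inn a x' \<bind> (\<lambda>w. return S (g w)) = Inn b x'" .
  qed
  finally show ?thesis .
qed

end

lemma bind_mass:
  assumes sM: "sets M = sets M0" and ne: "space M0 \<noteq> {}" and f: "f \<in> M0 \<rightarrow>\<^sub>M subprob_algebra N"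
    and a: "\<And>x. x \<in> space M0 \<Longrightarrow> emeasure (f x) (space N) = a"
  shows "emeasure (M \<bind> f) (space N) = a * emeasure M (space M)"
proof -
  have sp: "space M = space M0" using sets_eq_imp_space_eq[OF sM] .
  have f': "f \<in> M \<rightarrow>\<^sub>M subprob_algebra N" using f unfolding measurable_cong_sets[OF sM refl] .
  have "emeasure (M \<bind> f) (space N) = (\<integral>\<^sup>+x. emeasure (f x) (space N) \<partial>M)"
    using ne sp by (intro emeasure_bind[OF _ f']) auto
  also have "\<dots> = (\<integral>\<^sup>+x. a \<partial>M)"
    using a sp by (intro nn_integral_cong) auto
  finally show ?thesis by simp
qed

definition merge :: "nat \<Rightarrow> nat \<Rightarrow> ((nat \<Rightarrow> 'y) \<times> (nat \<Rightarrow> 'u)) \<times> 'x \<times> 'u \<Rightarrow> (nat \<Rightarrow> 'y) \<times> (nat \<Rightarrow> 'u) \<Rightarrow> (nat \<Rightarrow> 'y) \<times> (nat \<Rightarrow> 'u)" where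
  "merge N k z h = ((\<lambda>i\<in>{..N}. if i \<le> k then fst h i else fst (fst z) (i - Suc k)),
                  (\<lambda>j\<in>{1..N}. if j \<le> k then snd h j else if j = Suc k then snd (snd z) else snd (fst z) (j - Suc k)))"

lemma merge_meas_gen:
  assumes f: "f \<in> M \<rightarrow>\<^sub>M mem_space N MY MU"
    and z1: "fst (fst z) \<in> PiE {..N} (\<lambda>_. space MY)" "snd (fst z) \<in> PiE {1..N} (\<lambda>_. space MU)" "snd (snd z) \<in> space MU"
  shows "(\<lambda>w. merge N k z (f w)) \<in> M \<rightarrow>\<^sub>M mem_space N MY MU"
proof -
  have f1[measurable]: "(\<lambda>w. fst (f w)) \<in> M \<rightarrow>\<^sub>M PiM {..N} (\<lambda>_. MY)"
    using f unfolding mem_space_def by measurable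
  have f2[measurable]: "(\<lambda>w. snd (f w)) \<in> M \<rightarrow>\<^sub>M PiM {1..N} (\<lambda>_. MU)"
    using f unfolding mem_space_def by measurable
  show ?thesis
    unfolding merge_def mem_space_def
  proof (intro measurable_Pair measurable_restrict)
    fix i assume i: "i \<in> {..N}"
    show "(\<lambda>w. if i \<le> k then fst (f w) i else fst (fst z) (i - Suc k)) \<in> M \<rightarrow>\<^sub>M MY"
    proof (cases "i \<le> k")
      case True
      then show ?thesis using i by simp
    next
      case False
      have "fst (fst z) (i - Suc k) \<in> space MY" using z1(1) i by auto
      then show ?thesis using False by simp
    qed
  next
    fix j assume j: "j \<in> {1..N}"
    show "(\<lambda>w. if j \<le> k then snd (f w) j else if j = Suc k then snd (snd z) else snd (fst z) (j - Suc k)) \<in> M \<rightarrow>\<^sub>M MU"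
    proof (cases "j \<le> k")
      case True
      then show ?thesis using j by simp
    next
      case False
      have "snd (fst z) (j - Suc k) \<in> space MU" if "j \<noteq> Suc k"
      proof -
        have "j - Suc k \<in> {1..N}" using j False that by auto
        then show ?thesis using PiE_mem[OF z1(2)] by blast
      qed
      then show ?thesis using False z1(3) by simp
    qed
  qed
qed

context fmc
begin

lemma Y_ne: "Y \<noteq> {}"
proof -
  obtain x where x: "x \<in> X" using X_ne by blast
  have "prob_space (Obs x)" "sets (Obs x) = sets (bspace Y)"
    using measurable_space[OF Obs, of x] x by (auto simp: space_prob_algebra)
  then have "space (Obs x) = Y" "space (Obs x) \<noteq> {}"
    using sets_eq_imp_space_eq[of "Obs x" "bspace Y"] prob_space.not_empty by auto
  then show ?thesis by simp
qed

lemma S_ne: "space S \<noteq> {}"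
proof -
  obtain y where y: "y \<in> Y" using Y_ne by blast
  obtain u where u: "u \<in> U" using U_ne by blast
  obtain x where x: "x \<in> X" using X_ne by blast
  have "(((\<lambda>i\<in>{..N}. y), (\<lambda>j\<in>{1..N}. u)), x, u) \<in> space S"
    using y u x by (simp add: mem_space_def space_pair_measure space_PiM)
  then show ?thesis by blast
qed

definition "zs = (SOME z. z \<in> space S)"
lemma zs: "zs \<in> space S" unfolding zs_def using S_ne by (simp add: some_in_eq)

definition "mS k z w = (merge N k z (fst w), fst (snd w), snd (snd w))"

lemma space_MH: "space MH = (PiE {..N} (\<lambda>_. Y)) \<times> (PiE {1..N} (\<lambda>_. U))"
  by (simp add: mem_space_def space_pair_measure space_PiM)

lemma merge_meas:
  assumes z: "z \<in> space S"
  shows "(\<lambda>w. merge N k z (fst w)) \<in> S \<rightarrow>\<^sub>M MH"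
proof -
  have z1: "fst (fst z) \<in> PiE {..N} (\<lambda>_. space (bspace Y))" "snd (fst z) \<in> PiE {1..N} (\<lambda>_. space (bspace U))" "snd (snd z) \<in> space (bspace U)"
    using S_space[OF z] by (auto simp: space_MH)
  show ?thesis by (rule merge_meas_gen[OF measurable_fst z1])
qed

lemma mS_meas: "z \<in> space S \<Longrightarrow> mS k z \<in> S \<rightarrow>\<^sub>M S"
  unfolding mS_def using merge_meas by measurable

lemma mS_space: "z \<in> space S \<Longrightarrow> w \<in> space S \<Longrightarrow> mS k z w \<in> space S"
  using measurable_space[OF mS_meas] by blast

lemma merge_shift: "merge N (Suc k) z (mem_shift N h y u) = mem_shift N (merge N k z h) y u"
  unfolding merge_def mem_shift_def
  by (auto simp: fun_eq_iff restrict_def Suc_diff_le)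

lemma merge0: "merge N 0 z (mem_shift N h y u) = mem_shift N (fst z) y (snd (snd z))"
  unfolding merge_def mem_shift_def
  by (auto simp: fun_eq_iff restrict_def)

lemma mergeN: "h \<in> space MH \<Longrightarrow> merge N N z h = h"
  unfolding merge_def space_MH
  by (cases h) (auto simp: fun_eq_iff restrict_def PiE_def extensional_def)

end

context fmc
begin

primrec Pi :: "nat \<Rightarrow> (((nat \<Rightarrow> 'y) \<times> (nat \<Rightarrow> 'u)) \<times> 'x \<times> 'u) measure" where
  "Pi 0 = K1 zs"
| "Pi (Suc k) = Pi k \<bind> K2"

lemma sets_Pi: "sets (Pi k) = sets S"
proof (induction k)
  case 0
  then show ?case using sets_kernel[OF K1_meas zs] by simp
next
  case (Suc k)
  have ne: "space (Pi k) \<noteq> {}" using sets_eq_imp_space_eq[OF Suc] S_ne by simp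
  have "K2 \<in> Pi k \<rightarrow>\<^sub>M subprob_algebra S" using K2_meas unfolding measurable_cong_sets[OF Suc refl] .
  from sets_bind_measurable[OF this ne] show ?case by simp
qed

lemma space_Pi: "space (Pi k) = space S" using sets_eq_imp_space_eq[OF sets_Pi] .

definition "L k z = Pi k \<bind> (\<lambda>w. return S (mS k z w))"

lemma rg_meas: "z \<in> space S \<Longrightarrow> (\<lambda>w. return S (mS k z w)) \<in> S \<rightarrow>\<^sub>M subprob_algebra S"
  by (rule measurable_compose[OF mS_meas return_measurable])

lemma sets_L: "z \<in> space S \<Longrightarrow> sets (L k z) = sets S"
proof -
  assume z: "z \<in> space S"
  have ne: "space (Pi k) \<noteq> {}" using space_Pi S_ne by simp
  have "(\<lambda>w. return S (mS k z w)) \<in> Pi k \<rightarrow>\<^sub>M subprob_algebra S"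
    using rg_meas[OF z] unfolding measurable_cong_sets[OF sets_Pi refl] .
  from sets_bind_measurable[OF this ne] show ?thesis by (simp add: L_def)
qed

lemma K2_mS:
  assumes z: "z \<in> space S" and w: "w \<in> space S"
  shows "K2 w \<bind> (\<lambda>w'. return S (mS (Suc k) z w')) = K2 (mS k z w)"
proof -
  have "K2 w \<bind> (\<lambda>w'. return S (mS (Suc k) z w')) = T (fst (snd w), snd (snd w)) \<bind> Inn (mS k z w)"
    unfolding K2_def
  proof (rule push[OF T_sets[OF w] w mS_space[OF z w] mS_meas[OF z]])
    fix x' y u
    show "mS (Suc k) z (mem_shift N (fst w) y (snd (snd w)), x', u) =
          (mem_shift N (fst (mS k z w)) y (snd (snd (mS k z w))), x', u)"
      by (simp add: mS_def merge_shift)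
  qed
  also have "\<dots> = K2 (mS k z w)" by (simp add: K2_def mS_def)
  finally show ?thesis .
qed

lemma L_Suc:
  assumes z: "z \<in> space S"
  shows "L (Suc k) z = L k z \<bind> K2"
proof -
  have "L (Suc k) z = Pi k \<bind> (\<lambda>w. K2 w \<bind> (\<lambda>w'. return S (mS (Suc k) z w')))"
    unfolding L_def Pi.simps by (rule bind_assoc_S[OF sets_Pi K2_meas rg_meas[OF z]])
  also have "\<dots> = Pi k \<bind> (\<lambda>w. K2 (mS k z w))"
    by (rule bind_cong[OF refl]) (simp add: space_Pi K2_mS[OF z])
  also have "\<dots> = Pi k \<bind> (\<lambda>w. return S (mS k z w) \<bind> K2)"
    by (rule bind_cong[OF refl]) (simp add: space_Pi bind_return[OF K2_meas mS_space[OF z]])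
  also have "\<dots> = L k z \<bind> K2"
    unfolding L_def by (rule bind_assoc_S[OF sets_Pi rg_meas[OF z] K2_meas, symmetric])
  finally show ?thesis .
qed

lemma L_0:
  assumes z: "z \<in> space S"
  shows "L 0 z = K1 z"
  unfolding L_def Pi.simps K1_def
proof (rule push[OF lx_sets zs z mS_meas[OF z]])
  fix x' y u
  show "mS 0 z (mem_shift N (fst zs) y (snd (snd zs)), x', u) = (mem_shift N (fst z) y (snd (snd z)), x', u)"
    by (simp add: mS_def merge0)
qed

lemma L_N:
  assumes z: "z \<in> space S"
  shows "L N z = Pi N"
proof -
  have "L N z = Pi N \<bind> return S"
    unfolding L_def
  proof (rule bind_cong[OF refl])
    fix w assume "w \<in> space (Pi N)"
    then have "fst w \<in> space MH" using space_Pi S_space by auto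
    then show "return S (mS N z w) = return S w" by (simp add: mS_def mergeN)
  qed
  also have "\<dots> = Pi N" by (rule bind_return''[OF sets_Pi])
  finally show ?thesis .
qed

lemma kp_space: "z \<in> space S \<Longrightarrow> sets (kernel_pow S P n z) = sets S"
  using kernel_pow_space[OF P_meas] by (auto simp: space_prob_algebra)

lemma L_minor:
  assumes z: "z \<in> space S"
  shows "A \<in> sets S \<Longrightarrow> emeasure (L k z) A \<le> emeasure (kernel_pow S P (Suc k) z) A"
proof (induction k arbitrary: A)
  case 0
  have "kernel_pow S P (Suc 0) z = P z" using bind_return[OF P_sub z] by simp
  then show ?case using K1_le[OF z 0] L_0[OF z] by simp
next
  case (Suc k)
  have "emeasure (L k z \<bind> K2) A \<le> emeasure (kernel_pow S P (Suc k) z \<bind> P) A"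
    by (rule bind_le[OF sets_L[OF z] kp_space[OF z] K2_meas P_sub Suc.IH K2_le Suc.prems])
  then show ?case using L_Suc[OF z] by simp
qed

end

context fmc
begin

lemma Inn_mass:
  assumes z: "z \<in> space S" and x: "x' \<in> X"
  shows "emeasure (Inn z x') (space S) = emeasure lu U"
proof -
  have sO: "sets (Obs x') = sets (bspace Y)" and pO: "prob_space (Obs x')"
    using measurable_space[OF Obs, of x'] x by (auto simp: space_prob_algebra)
  have inner: "emeasure (lu \<bind> (\<lambda>u'. return S (mem_shift N (fst z) y (snd (snd z)), x', u'))) (space S) = emeasure lu U"
    if y: "y \<in> space (bspace Y)" for y
  proof -
    have "emeasure (lu \<bind> (\<lambda>u'. return S (mem_shift N (fst z) y (snd (snd z)), x', u'))) (space S) = 1 * emeasure lu (space lu)"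
    proof (rule bind_mass[OF lu_sets _ sec3[OF z x]])
      show "space (bspace U) \<noteq> {}" using U_ne by simp
      show "y \<in> Y" using y by simp
      fix u assume "u \<in> space (bspace U)"
      then have "(mem_shift N (fst z) y (snd (snd z)), x', u) \<in> space S"
        using ms_space[of "fst z" y "snd (snd z)"] S_space[OF z] x y by (simp add: space_pair_measure)
      then show "emeasure (return S (mem_shift N (fst z) y (snd (snd z)), x', u)) (space S) = 1" by simp
    qed
    then show ?thesis by (simp add: lu_space)
  qed
  have "emeasure (Inn z x') (space S) = emeasure lu U * emeasure (Obs x') (space (Obs x'))"
    unfolding Inn_def by (rule bind_mass[OF sO _ sec1[OF z x] inner]) (use Y_ne in simp)
  then show ?thesis using prob_space.emeasure_space_1[OF pO] by simp
qed

lemma K2_mass: "w \<in> space S \<Longrightarrow> emeasure (K2 w) (space S) = emeasure lu U"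
proof -
  assume w: "w \<in> space S"
  have pT: "prob_space (T (fst (snd w), snd (snd w)))" using T_prob S_space[OF w] by blast
  have "emeasure (K2 w) (space S) = emeasure lu U * emeasure (T (fst (snd w), snd (snd w))) (space (T (fst (snd w), snd (snd w))))"
    unfolding K2_def by (rule bind_mass[OF T_sets[OF w] _ Inn_meas[OF w] Inn_mass[OF w]]) (use X_ne in simp_all)
  then show ?thesis using prob_space.emeasure_space_1[OF pT] by simp
qed

lemma K1_mass: "z \<in> space S \<Longrightarrow> emeasure (K1 z) (space S) = emeasure lu U * emeasure lx X"
proof -
  assume z: "z \<in> space S"
  have "emeasure (K1 z) (space S) = emeasure lu U * emeasure lx (space lx)"
    unfolding K1_def by (rule bind_mass[OF lx_sets _ Inn_meas[OF z] Inn_mass[OF z]]) (use X_ne in simp_all)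
  then show ?thesis by (simp add: lx_space)
qed

lemma Pi_mass_ne: "emeasure (Pi k) (space S) \<noteq> 0"
proof (induction k)
  case 0
  then show ?case using K1_mass[OF zs] lu_nontriv lx_nontriv by simp
next
  case (Suc k)
  have "emeasure (Pi (Suc k)) (space S) = emeasure lu U * emeasure (Pi k) (space (Pi k))"
    unfolding Pi.simps by (rule bind_mass[OF sets_Pi S_ne K2_meas K2_mass])
  then show ?case using Suc lu_nontriv by (simp add: space_Pi)
qed

lemma Pi_mass_le: "emeasure (Pi N) (space S) \<le> 1"
proof -
  have "emeasure (Pi N) (space S) = emeasure (L N zs) (space S)" using L_N[OF zs] by simp
  also have "\<dots> \<le> emeasure (kernel_pow S P (Suc N) zs) (space S)" by (rule L_minor[OF zs]) simp
  also have "\<dots> = 1"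
    using kernel_pow_space[OF P_meas zs, of "Suc N"] kp_space[OF zs, of "Suc N"]
    by (metis in_space_prob_algebra)
  finally show ?thesis .
qed

theorem fm_ergodic: "exp_ergodic S P"
proof -
  define a where "a = emeasure (Pi N) (space S)"
  define r where "r = enn2real a"
  have a_fin: "a \<noteq> \<top>" using Pi_mass_le unfolding a_def by (auto simp: top_unique)
  have ar: "a = ennreal r" using a_fin unfolding r_def by (simp add: less_top[symmetric])
  have r0: "0 < r" using Pi_mass_ne a_fin unfolding r_def a_def
    by (simp add: enn2real_positive_iff zero_less_iff_neq_zero less_top[symmetric])
  have r1: "r \<le> 1" using enn2real_mono[OF Pi_mass_le] unfolding r_def a_def by simp
  define \<nu> where "\<nu> = scale_measure (ennreal (1/2)) (Pi N)"
  interpret doeblin S P "Suc N" "r / 2" \<nu>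
  proof
    show "P \<in> S \<rightarrow>\<^sub>M prob_algebra S" by (rule P_meas)
    show "0 < Suc N" by simp
    show "0 < r / 2" "r / 2 < 1" using r0 r1 by auto
    show "sets \<nu> = sets S" by (simp add: \<nu>_def sets_Pi)
    show "emeasure \<nu> (space S) = ennreal (r / 2)"
    proof -
      have "emeasure \<nu> (space S) = ennreal (1/2) * ennreal r"
        by (simp only: \<nu>_def emeasure_scale_measure a_def[symmetric] ar)
      also have "\<dots> = ennreal (r / 2)" using r0 by (subst ennreal_mult[symmetric]) auto
      finally show ?thesis .
    qed
    fix z A assume z: "z \<in> space S" and A: "A \<in> sets S"
    have "emeasure \<nu> A = ennreal (1/2) * emeasure (Pi N) A" by (simp add: \<nu>_def)
    also have "\<dots> \<le> 1 * emeasure (Pi N) A"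
      by (intro mult_right_mono) (use ennreal_leI[of "1/2::real" 1] in auto)
    also have "\<dots> = emeasure (L N z) A" using L_N[OF z] by simp
    also have "\<dots> \<le> emeasure (kernel_pow S P (Suc N) z) A" by (rule L_minor[OF z A])
    finally show "emeasure \<nu> A \<le> emeasure (kernel_pow S P (Suc N) z) A" .
  qed
  show ?thesis by (rule ergodic)
qed

end

theorem lemma1:
  fixes X :: "'x::euclidean_space set" and Y :: "'y::euclidean_space set"
    and U :: "'u::euclidean_space set" and N :: nat
    and T :: "'x \<times> 'u \<Rightarrow> 'x measure" and Obs :: "'x \<Rightarrow> 'y measure"
    and \<gamma> :: "(nat \<Rightarrow> 'y) \<times> (nat \<Rightarrow> 'u) \<Rightarrow> 'u measure"
    and lx :: "'x measure" and lu :: "'u measure"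
  assumes X: "X \<in> sets borel" and Y: "Y \<in> sets borel" and U: "U \<in> sets borel"
    and N: "N \<ge> 1"
    and T: "T \<in> bspace X \<Otimes>\<^sub>M bspace U \<rightarrow>\<^sub>M prob_algebra (bspace X)"
    and Obs: "Obs \<in> bspace X \<rightarrow>\<^sub>M prob_algebra (bspace Y)"
    and \<gamma>: "\<gamma> \<in> mem_space N (bspace Y) (bspace U) \<rightarrow>\<^sub>M prob_algebra (bspace U)"
    and lx_sets: "sets lx = sets (bspace X)" and lx_nontriv: "emeasure lx X \<noteq> 0"
    and lu_sets: "sets lu = sets (bspace U)" and lu_nontriv: "emeasure lu U \<noteq> 0"
    and T_minor: "\<And>x u A. x \<in> X \<Longrightarrow> u \<in> U \<Longrightarrow> A \<in> sets (bspace X) \<Longrightarrow>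
                    emeasure (T (x, u)) A \<ge> emeasure lx A"
    and \<gamma>_minor: "\<And>h A. h \<in> space (mem_space N (bspace Y) (bspace U)) \<Longrightarrow> A \<in> sets (bspace U) \<Longrightarrow>
                    emeasure (\<gamma> h) A \<ge> emeasure lu A"
  shows "exp_ergodic (mem_space N (bspace Y) (bspace U) \<Otimes>\<^sub>M bspace X \<Otimes>\<^sub>M bspace U)
           (fm_kernel (mem_space N (bspace Y) (bspace U) \<Otimes>\<^sub>M bspace X \<Otimes>\<^sub>M bspace U) N T Obs \<gamma>)"
proof -
  interpret fmc X Y U N T Obs \<gamma> lx lu
    using N T Obs \<gamma> lx_sets lx_nontriv lu_sets lu_nontriv T_minor \<gamma>_minor by unfold_locales auto
  show ?thesis by (rule fm_ergodic)
qed

end
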